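(* Let $G$ be a finite simple graph with vertex set $[n]$ and let $\lambda>0$. Then $\mathrm{PRSforIS}_f(G,\lambda)$ terminates with probability $1$, for any choice function $f$. On termination, $\mathbf X$ is the indicator vector of an independent set $I$ of $G$, distributed according to the Gibbs (hard-core) distribution $\Pr(I)=\lambda^{|I|}/\sum_{J}\lambda^{|J|}$, where $J$ ranges over all independent sets of $G$, including $\emptyset$.
   Context: Variables $\mathbf X=(X_v:v\in[n])$ take values in $\{0,1\}$; $\mathbf X$ encodes the vertex set $\{v:X_v=1\}$. Under the product distribution, each $X_v$ is independently $1$ with probability $\lambda/(1+\lambda)$. For $S\subseteq[n]$, $\partial S=\{v\notin S:\ v\text{ is adjacent to some }u\in S\}$ and $\overline S=S\cup\partial S$. Let $\mathcal C$ be the family of sets $S\subseteq[n]$ with $|S|\ge2$ such that the induced subgraph $G[S]$ is connected. A set $S\in\mathcal C$ is a cluster (for the current $\mathbf X$) if $X_v=1$ for all $v\in S$ and $X_v=0$ for all $v\in\partial S$. $\mathbf X$ encodes an independent set iff there is no cluster. Algorithm $\mathrm{PRSforIS}_f(G,\lambda)$: fix a function $f$ assigning to each nonempty family $\mathcal N\subseteq\mathcal C$ an element $f(\mathcal N)\in\mathcal N$. Sample $\mathbf X$ from the product distribution. While $\mathbf X$ does not encode an independent set, let $\mathcal N$ be the set of current clusters, let $S=f(\mathcal N)$, and resample all $X_v$, $v\in\overline S$, independently as Bernoulli$(\lambda/(1+\lambda))$. *)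

theory Defs
  imports "HOL-Probability.Probability"
begin

text \<open>Simple graph on vertex set [n] = {1..n}, given by an adjacency relation E.
  A configuration X (a 0/1 vector indexed by [n]) is represented by the set {v. X_v = 1}.\<close>

definition vset :: "nat \<Rightarrow> nat set" where
  "vset n = {1..n}"

definition simple_graph :: "nat \<Rightarrow> (nat \<Rightarrow> nat \<Rightarrow> bool) \<Rightarrow> bool" where
  "simple_graph n E \<longleftrightarrow> (\<forall>u v. E u v \<longrightarrow> E v u) \<and> (\<forall>v. \<not> E v v)
     \<and> (\<forall>u v. E u v \<longrightarrow> u \<in> vset n \<and> v \<in> vset n)"

definition bdry :: "nat \<Rightarrow> (nat \<Rightarrow> nat \<Rightarrow> bool) \<Rightarrow> nat set \<Rightarrow> nat set" where
  "bdry n E S = {v \<in> vset n. v \<notin> S \<and> (\<exists>u\<in>S. E u v)}"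

definition clos :: "nat \<Rightarrow> (nat \<Rightarrow> nat \<Rightarrow> bool) \<Rightarrow> nat set \<Rightarrow> nat set" where
  "clos n E S = S \<union> bdry n E S"

definition induced_connected :: "(nat \<Rightarrow> nat \<Rightarrow> bool) \<Rightarrow> nat set \<Rightarrow> bool" where
  "induced_connected E S \<longleftrightarrow>
     (\<forall>u\<in>S. \<forall>v\<in>S. (\<lambda>a b. a \<in> S \<and> b \<in> S \<and> E a b)\<^sup>*\<^sup>* u v)"

definition conn_family :: "nat \<Rightarrow> (nat \<Rightarrow> nat \<Rightarrow> bool) \<Rightarrow> nat set set" where
  "conn_family n E = {S. S \<subseteq> vset n \<and> 2 \<le> card S \<and> induced_connected E S}"

definition is_cluster :: "nat \<Rightarrow> (nat \<Rightarrow> nat \<Rightarrow> bool) \<Rightarrow> nat set \<Rightarrow> nat set \<Rightarrow> bool" where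
  "is_cluster n E X S \<longleftrightarrow> S \<in> conn_family n E \<and> S \<subseteq> X \<and> bdry n E S \<inter> X = {}"

definition clusters :: "nat \<Rightarrow> (nat \<Rightarrow> nat \<Rightarrow> bool) \<Rightarrow> nat set \<Rightarrow> nat set set" where
  "clusters n E X = {S. is_cluster n E X S}"

definition indep_set :: "nat \<Rightarrow> (nat \<Rightarrow> nat \<Rightarrow> bool) \<Rightarrow> nat set \<Rightarrow> bool" where
  "indep_set n E I \<longleftrightarrow> I \<subseteq> vset n \<and> (\<forall>u\<in>I. \<forall>v\<in>I. \<not> E u v)"

definition choice_fun :: "nat \<Rightarrow> (nat \<Rightarrow> nat \<Rightarrow> bool) \<Rightarrow> (nat set set \<Rightarrow> nat set) \<Rightarrow> bool" where
  "choice_fun n E f \<longleftrightarrow> (\<forall>N. N \<noteq> {} \<and> N \<subseteq> conn_family n E \<longrightarrow> f N \<in> N)"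

definition prod_sample :: "real \<Rightarrow> nat set \<Rightarrow> nat set pmf" where
  "prod_sample lam T =
     map_pmf (\<lambda>g. {v \<in> T. g v}) (Pi_pmf T False (\<lambda>_. bernoulli_pmf (lam / (1 + lam))))"

text \<open>one iteration of the while loop (an independent set is absorbing = loop exited)\<close>
definition prs_step ::
  "nat \<Rightarrow> (nat \<Rightarrow> nat \<Rightarrow> bool) \<Rightarrow> real \<Rightarrow> (nat set set \<Rightarrow> nat set) \<Rightarrow> nat set \<Rightarrow> nat set pmf" where
  "prs_step n E lam f X =
     (if indep_set n E X then return_pmf X
      else (let T = clos n E (f (clusters n E X))
            in map_pmf (\<lambda>Y. (X - T) \<union> Y) (prod_sample lam T)))"

primrec prs_state ::
  "nat \<Rightarrow> (nat \<Rightarrow> nat \<Rightarrow> bool) \<Rightarrow> real \<Rightarrow> (nat set set \<Rightarrow> nat set) \<Rightarrow> nat \<Rightarrow> nat set pmf" where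
  "prs_state n E lam f 0 = prod_sample lam (vset n)"
| "prs_state n E lam f (Suc k) = bind_pmf (prs_state n E lam f k) (prs_step n E lam f)"

end

theory Submission
  imports Defs
begin

definition psw :: "real \<Rightarrow> nat set \<Rightarrow> nat set \<Rightarrow> real" where
 "psw lam T Y = (if Y \<subseteq> T then lam ^ card Y / (1+lam) ^ card T else 0)"

lemma psw_nonneg: "lam > 0 \<Longrightarrow> psw lam T Y \<ge> 0"
  by (simp add: psw_def)

lemma pmf_prod_sample:
  assumes T: "finite T" and lam: "lam > 0"
  shows "pmf (prod_sample lam T) Y = psw lam T Y"
proof (cases "Y \<subseteq> T")
  case True
  define p where "p = lam / (1+lam)"
  have p01: "0 \<le> p" "p \<le> 1" using lam by (auto simp: p_def)
  define h where "h = (\<lambda>g. {v \<in> T. g v})"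
  define M where "M = Pi_pmf T False (\<lambda>_. bernoulli_pmf p)"
  have ps: "prod_sample lam T = map_pmf h M" by (simp add: prod_sample_def h_def M_def p_def)
  have inj: "inj_on h (set_pmf M)"
  proof (rule inj_onI)
    fix g1 g2 assume g1: "g1 \<in> set_pmf M" and g2: "g2 \<in> set_pmf M" and e: "h g1 = h g2"
    from g1 g2 have "\<forall>x. x \<notin> T \<longrightarrow> g1 x = False" "\<forall>x. x \<notin> T \<longrightarrow> g2 x = False"
      using set_Pi_pmf_subset[OF T, of False "\<lambda>_. bernoulli_pmf p"] unfolding M_def by auto
    with e show "g1 = g2" unfolding h_def by (auto simp: fun_eq_iff set_eq_iff)
  qed
  define g where "g = (\<lambda>v. v \<in> Y)"
  have hg: "h g = Y" using True by (auto simp: h_def g_def)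
  have pm: "pmf M g = (\<Prod>v\<in>T. pmf (bernoulli_pmf p) (g v))"
    unfolding M_def using True by (intro pmf_Pi' T) (auto simp: g_def)
  also have "\<dots> = (\<Prod>v\<in>Y. p) * (\<Prod>v\<in>T-Y. 1 - p)"
  proof -
    have "(\<Prod>v\<in>T. pmf (bernoulli_pmf p) (g v)) = (\<Prod>v\<in>Y. pmf (bernoulli_pmf p) (g v)) * (\<Prod>v\<in>T-Y. pmf (bernoulli_pmf p) (g v))"
      using True T by (metis Diff_partition Diff_disjoint finite_Diff finite_subset prod.union_disjoint inf.commute)
    also have "\<dots> = (\<Prod>v\<in>Y. p) * (\<Prod>v\<in>T-Y. 1 - p)"
      using p01 by (simp add: g_def)
    finally show ?thesis .
  qed
  also have "\<dots> = lam ^ card Y / (1+lam) ^ card T"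
  proof -
    have cT: "card T = card Y + card (T - Y)" using True T
      by (metis card_Diff_subset finite_subset card_mono le_add_diff_inverse)
    have "1 - p = 1/(1+lam)" using lam by (simp add: p_def field_simps)
    then show ?thesis using lam by (simp add: cT p_def power_add power_divide field_simps)
  qed
  finally have pmg: "pmf M g = lam ^ card Y / (1+lam) ^ card T" .
  have gin: "g \<in> set_pmf M" using pmg lam by (simp add: set_pmf_eq)
  show ?thesis unfolding ps psw_def using True pmf_map_inj[OF inj gin] hg pmg by simp
next
  case False
  have "Y \<notin> set_pmf (prod_sample lam T)" using False by (auto simp: prod_sample_def)
  then show ?thesis using False by (simp add: psw_def set_pmf_eq)
qed

lemma set_prod_sample: "set_pmf (prod_sample lam T) \<subseteq> Pow T"
  by (auto simp: prod_sample_def)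

lemma cluster_nbr:
  assumes c: "is_cluster n E X S" and s: "s \<in> S"
  shows "\<exists>t\<in>S. E s t"
proof -
  have "2 \<le> card S" "induced_connected E S" using c by (auto simp: is_cluster_def conn_family_def)
  have "S - {s} \<noteq> {}"
  proof
    assume "S - {s} = {}" then have "S \<subseteq> {s}" by auto
    then have "card S \<le> card {s}" by (intro card_mono) auto
    then show False using \<open>2 \<le> card S\<close> by simp
  qed
  then obtain t where t: "t \<in> S" "t \<noteq> s" by auto
  have "(\<lambda>a b. a \<in> S \<and> b \<in> S \<and> E a b)\<^sup>*\<^sup>* s t"
    using \<open>induced_connected E S\<close> s t by (auto simp: induced_connected_def)
  then show ?thesis using t(2)
    by (cases rule: converse_rtranclpE) auto
qed

lemma clos_sub: "S \<subseteq> vset n \<Longrightarrow> clos n E S \<subseteq> vset n"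
  by (auto simp: clos_def bdry_def)

lemma clusters_sub: "clusters n E X \<subseteq> conn_family n E"
  by (auto simp: clusters_def is_cluster_def)

lemma cluster_sub: "is_cluster n E X S \<Longrightarrow> S \<subseteq> vset n"
  by (auto simp: is_cluster_def conn_family_def)

lemma cluster_not_indep: "is_cluster n E X S \<Longrightarrow> \<not> indep_set n E X"
proof -
  assume c: "is_cluster n E X S"
  then have "S \<noteq> {}" by (auto simp: is_cluster_def conn_family_def)
  then obtain s where s: "s \<in> S" by auto
  then obtain t where "t \<in> S" "E s t" using cluster_nbr[OF c] by blast
  then show ?thesis using c s by (auto simp: indep_set_def is_cluster_def)
qed

lemma rtc_restrict:
  fixes Rl :: "nat \<Rightarrow> nat \<Rightarrow> bool"
  assumes "Rl\<^sup>*\<^sup>* u w"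
  shows "(\<lambda>a b. a \<in> {x. Rl\<^sup>*\<^sup>* u x} \<and> b \<in> {x. Rl\<^sup>*\<^sup>* u x} \<and> Rl a b)\<^sup>*\<^sup>* u w"
  using assms
proof (induction rule: rtranclp_induct)
  case base then show ?case by simp
next
  case (step y z)
  have z: "Rl\<^sup>*\<^sup>* u z" using step(1,2) by (rule rtranclp.rtrancl_into_rtrancl)
  show ?case
  proof (rule rtranclp.rtrancl_into_rtrancl[OF step.IH])
    show "y \<in> {x. Rl\<^sup>*\<^sup>* u x} \<and> z \<in> {x. Rl\<^sup>*\<^sup>* u x} \<and> Rl y z"
      using step(1,2) z by simp
  qed
qed

lemma sym_rtc:
  fixes Rl :: "nat \<Rightarrow> nat \<Rightarrow> bool"
  assumes sym: "\<And>a b. Rl a b \<Longrightarrow> Rl b a" and "Rl\<^sup>*\<^sup>* u w"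
  shows "Rl\<^sup>*\<^sup>* w u"
  using assms(2)
proof (induction rule: rtranclp_induct)
  case base then show ?case by simp
next
  case (step y z)
  then show ?case using sym[OF step(2)] converse_rtranclp_into_rtranclp by metis
qed

lemma indep_iff_no_cluster:
  assumes sg: "simple_graph n E" and X: "X \<subseteq> vset n"
  shows "indep_set n E X \<longleftrightarrow> clusters n E X = {}"
proof
  assume "indep_set n E X" then show "clusters n E X = {}"
    using cluster_not_indep by (auto simp: clusters_def)
next
  assume nc: "clusters n E X = {}"
  show "indep_set n E X"
  proof (rule ccontr)
    assume "\<not> indep_set n E X"
    then obtain u v where uv: "u \<in> X" "v \<in> X" "E u v" using X by (auto simp: indep_set_def)
    define Rl where "Rl = (\<lambda>a b. a \<in> X \<and> b \<in> X \<and> E a b)"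
    define C where "C = {x. Rl\<^sup>*\<^sup>* u x}"
    have symR: "\<And>a b. Rl a b \<Longrightarrow> Rl b a" using sg by (auto simp: Rl_def simple_graph_def)
    have CX: "C \<subseteq> X"
    proof
      fix x assume "x \<in> C" then have "Rl\<^sup>*\<^sup>* u x" by (simp add: C_def)
      then show "x \<in> X" using uv(1) by (induction rule: rtranclp_induct) (auto simp: Rl_def)
    qed
    have uC: "u \<in> C" by (simp add: C_def)
    have "Rl u v" using uv by (simp add: Rl_def)
    then have vC: "v \<in> C" unfolding C_def by (simp add: r_into_rtranclp)
    have uv_ne: "u \<noteq> v" using uv(3) sg by (auto simp: simple_graph_def)
    have finC: "finite C"
    proof -
      have "finite (vset n)" by (simp add: vset_def)
      then show ?thesis using finite_subset[OF subset_trans[OF CX X]] by simp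
    qed
    have c2: "2 \<le> card C"
    proof -
      have "card {u, v} \<le> card C" using uC vC finC by (intro card_mono) auto
      then show ?thesis using uv_ne by simp
    qed
    have conn: "induced_connected E C"
      unfolding induced_connected_def
    proof (intro ballI)
      fix a b assume a: "a \<in> C" and b: "b \<in> C"
      let ?RC = "\<lambda>a b. a \<in> C \<and> b \<in> C \<and> Rl a b"
      have ua: "?RC\<^sup>*\<^sup>* u a" using rtc_restrict[of Rl u a] a by (simp add: C_def)
      have ub: "?RC\<^sup>*\<^sup>* u b" using rtc_restrict[of Rl u b] b by (simp add: C_def)
      have symRC: "\<And>x y. ?RC x y \<Longrightarrow> ?RC y x" using symR by blast
      have "?RC\<^sup>*\<^sup>* a u" using symRC ua by (rule sym_rtc)
      then have ab: "?RC\<^sup>*\<^sup>* a b" using ub by (rule rtranclp_trans)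
      have mono: "\<And>x y. ?RC x y \<longrightarrow> (x \<in> C \<and> y \<in> C \<and> E x y)" by (simp add: Rl_def)
      show "(\<lambda>a b. a \<in> C \<and> b \<in> C \<and> E a b)\<^sup>*\<^sup>* a b"
        using mono_rtranclp[of ?RC "\<lambda>a b. a \<in> C \<and> b \<in> C \<and> E a b", OF mono] ab by blast
    qed
    have bd: "bdry n E C \<inter> X = {}"
    proof (rule ccontr)
      assume "bdry n E C \<inter> X \<noteq> {}"
      then obtain b c where b: "b \<in> X" "b \<notin> C" "c \<in> C" "E c b" by (auto simp: bdry_def)
      then have "Rl c b" using CX by (auto simp: Rl_def)
      then have "Rl\<^sup>*\<^sup>* u b" using b(3) by (auto simp: C_def)
      then show False using b(2) by (simp add: C_def)
    qed
    have "is_cluster n E X C" using CX X c2 conn bd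
      by (auto simp: is_cluster_def conn_family_def)
    then show False using nc by (auto simp: clusters_def)
  qed
qed


primrec iter :: "nat \<Rightarrow> (nat \<Rightarrow> nat \<Rightarrow> bool) \<Rightarrow> real \<Rightarrow> (nat set set \<Rightarrow> nat set) \<Rightarrow> nat \<Rightarrow> nat set \<Rightarrow> nat set pmf" where
  "iter n E lam f 0 X = return_pmf X"
| "iter n E lam f (Suc k) X = bind_pmf (prs_step n E lam f X) (iter n E lam f k)"

lemma iter0: "iter n E lam f 0 = return_pmf" by (rule ext) simp

lemma iter_Suc': "iter n E lam f (Suc k) X = bind_pmf (iter n E lam f k X) (prs_step n E lam f)"
proof (induction k arbitrary: X)
  case 0 then show ?case by (simp only: iter.simps iter0 bind_return_pmf bind_return_pmf')
next
  case (Suc k)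
  have eq: "iter n E lam f (Suc k) = (\<lambda>Y. bind_pmf (iter n E lam f k Y) (prs_step n E lam f))"
    using Suc.IH by (intro ext) (simp only: iter.simps)
  have "iter n E lam f (Suc (Suc k)) X = bind_pmf (prs_step n E lam f X) (iter n E lam f (Suc k))"
    by (rule iter.simps(2))
  also have "\<dots> = bind_pmf (prs_step n E lam f X) (\<lambda>Y. bind_pmf (iter n E lam f k Y) (prs_step n E lam f))"
    by (simp only: eq)
  also have "\<dots> = bind_pmf (bind_pmf (prs_step n E lam f X) (iter n E lam f k)) (prs_step n E lam f)"
    by (simp only: bind_assoc_pmf)
  also have "\<dots> = bind_pmf (iter n E lam f (Suc k) X) (prs_step n E lam f)"
    by (simp only: iter.simps)
  finally show ?case .
qed

lemma state_add: "prs_state n E lam f (k + m) = bind_pmf (prs_state n E lam f k) (iter n E lam f m)"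
proof (induction m)
  case 0 then show ?case by (simp add: bind_return_pmf' iter0)
next
  case (Suc m)
  have "prs_state n E lam f (k + Suc m) = bind_pmf (prs_state n E lam f (k + m)) (prs_step n E lam f)" by simp
  also have "\<dots> = bind_pmf (prs_state n E lam f k) (\<lambda>X. bind_pmf (iter n E lam f m X) (prs_step n E lam f))"
    using Suc by (simp add: bind_assoc_pmf)
  also have eq: "(\<lambda>X. bind_pmf (iter n E lam f m X) (prs_step n E lam f)) = iter n E lam f (Suc m)"
    by (rule ext) (simp only: iter_Suc')
  finally show ?case by (simp only: eq)
qed

lemma state_eq: "prs_state n E lam f k = bind_pmf (prod_sample lam (vset n)) (iter n E lam f k)"
  using state_add[of n E lam f 0 k] by simp

lemma pmf_bind_fin:
  assumes "finite A" "set_pmf M \<subseteq> A"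
  shows "pmf (bind_pmf M g) x = (\<Sum>a\<in>A. pmf M a * pmf (g a) x)"
proof -
  have "pmf (bind_pmf M g) x = (\<Sum>a\<in>A. pmf (g a) x * pmf M a)"
    unfolding pmf_bind using assms by (intro integral_measure_pmf_real) auto
  then show ?thesis by (simp add: mult.commute)
qed

lemma sum_inj_le:
  fixes a b :: "'x \<Rightarrow> real"
  assumes "finite A" "finite B" "D \<subseteq> A" "\<phi> ` D \<subseteq> B" "inj_on \<phi> D"
    and "\<And>x. x \<in> A - D \<Longrightarrow> a x = 0" and "\<And>x. x \<in> D \<Longrightarrow> a x \<le> b (\<phi> x)"
    and "\<And>y. y \<in> B \<Longrightarrow> b y \<ge> 0"
  shows "sum a A \<le> sum b B"
proof -
  have "sum a A = sum a D + sum a (A - D)"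
    using assms(1,3) by (metis add.commute sum.subset_diff)
  also have "sum a (A - D) = 0" using assms(6) by simp
  also have "sum a D \<le> sum (b \<circ> \<phi>) D" using assms(7) by (intro sum_mono) simp
  also have "sum (b \<circ> \<phi>) D = sum b (\<phi> ` D)" using assms(5) by (simp add: sum.reindex)
  also have "\<dots> \<le> sum b B" using assms(2,4,8) by (intro sum_mono2) auto
  finally show ?thesis by simp
qed

lemma swap_core:
  fixes w w' :: "nat set \<Rightarrow> real"
  assumes U: "finite U" and lam: "lam > 0"
    and w0: "\<And>Y. Y \<subseteq> U \<Longrightarrow> w Y \<ge> 0" and w'0: "\<And>Y. Y \<subseteq> U \<Longrightarrow> w' Y \<ge> 0"
    and wD: "\<And>Y. Y \<subseteq> U \<Longrightarrow> w Y \<noteq> 0 \<Longrightarrow> Y \<inter> (U - K) = I \<inter> (U - K)"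
    and ww: "\<And>Y. Y \<subseteq> U \<Longrightarrow> Y \<inter> (U - K) = I \<inter> (U - K) \<Longrightarrow>
               w Y \<le> w' ((Y \<inter> K) \<union> (I' \<inter> (U - K)))"
  shows "(\<Sum>Y\<in>Pow U. psw lam U Y * w Y) * lam ^ card (I' \<inter> (U - K))
       \<le> (\<Sum>Y\<in>Pow U. psw lam U Y * w' Y) * lam ^ card (I \<inter> (U - K))"
proof -
  define D where "D = {Y\<in>Pow U. Y \<inter> (U - K) = I \<inter> (U - K)}"
  define \<phi> where "\<phi> = (\<lambda>Y. (Y \<inter> K) \<union> (I' \<inter> (U - K)))"
  let ?a = "\<lambda>Y. psw lam U Y * w Y * lam ^ card (I' \<inter> (U - K))"
  let ?b = "\<lambda>Y. psw lam U Y * w' Y * lam ^ card (I \<inter> (U - K))"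
  have "(\<Sum>Y\<in>Pow U. ?a Y) \<le> (\<Sum>Y\<in>Pow U. ?b Y)"
  proof (rule sum_inj_le[where D=D and \<phi>=\<phi>])
    show "finite (Pow U)" using U by simp
    show "finite (Pow U)" using U by simp
    show "D \<subseteq> Pow U" by (auto simp: D_def)
    show "\<phi> ` D \<subseteq> Pow U" by (auto simp: D_def \<phi>_def)
    show "inj_on \<phi> D"
    proof (rule inj_onI)
      fix Y1 Y2 assume "Y1 \<in> D" "Y2 \<in> D" "\<phi> Y1 = \<phi> Y2"
      then have "Y1 \<inter> K = Y2 \<inter> K" "Y1 \<inter> (U - K) = Y2 \<inter> (U - K)" "Y1 \<subseteq> U" "Y2 \<subseteq> U"
        unfolding D_def \<phi>_def by blast+
      then show "Y1 = Y2" by blast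
    qed
    show "?a x = 0" if "x \<in> Pow U - D" for x
      using wD[of x] that by (auto simp: D_def)
    show "?b y \<ge> 0" if "y \<in> Pow U" for y
      using that w'0[of y] lam by (auto simp: psw_nonneg)
    show "?a Y \<le> ?b (\<phi> Y)" if Y: "Y \<in> D" for Y
    proof -
      have YU: "Y \<subseteq> U" and YI: "Y \<inter> (U - K) = I \<inter> (U - K)" using Y by (auto simp: D_def)
      have fin: "finite Y" using YU U finite_subset by auto
      have c1: "card Y = card (Y \<inter> K) + card (I \<inter> (U - K))"
      proof -
        have "Y = (Y \<inter> K) \<union> (Y \<inter> (U - K))" using YU by blast
        then have "card Y = card ((Y \<inter> K) \<union> (Y \<inter> (U - K)))" by simp
        also have "\<dots> = card (Y \<inter> K) + card (Y \<inter> (U - K))"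
          using fin by (intro card_Un_disjoint) auto
        finally show ?thesis using YI by simp
      qed
      have c2: "card (\<phi> Y) = card (Y \<inter> K) + card (I' \<inter> (U - K))"
        unfolding \<phi>_def using fin U by (intro card_Un_disjoint) auto
      have pY: "\<phi> Y \<subseteq> U" using YU by (auto simp: \<phi>_def)
      have "w Y \<le> w' (\<phi> Y)" using ww[OF YU YI] by (simp add: \<phi>_def)
      then have "lam ^ (card (Y \<inter> K) + card (I \<inter> (U - K)) + card (I' \<inter> (U - K))) / (1 + lam) ^ card U * w Y
          \<le> lam ^ (card (Y \<inter> K) + card (I \<inter> (U - K)) + card (I' \<inter> (U - K))) / (1 + lam) ^ card U * w' (\<phi> Y)"
        using lam by (intro mult_left_mono) auto
      then show ?thesis using YU pY
        by (simp add: psw_def c1 c2 power_add field_simps)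
    qed
  qed
  then show ?thesis by (simp add: sum_distrib_right)
qed

lemma cluster_transfer:
  assumes sg: "simple_graph n E"
    and P0: "\<forall>v u. v \<in> R \<and> v \<in> X \<and> E v u \<longrightarrow> u \<in> R"
    and agree: "X \<inter> R = X' \<inter> R"
    and out: "X - R \<subseteq> J" and J: "indep_set n E J"
    and c: "is_cluster n E X S"
  shows "is_cluster n E X' S"
proof -
  have P: "\<And>v u. v \<in> R \<Longrightarrow> v \<in> X \<Longrightarrow> E v u \<Longrightarrow> u \<in> R" using P0 by blast
  have SX: "S \<subseteq> X" and bd: "bdry n E S \<inter> X = {}" and cf: "S \<in> conn_family n E"
    using c by (auto simp: is_cluster_def)
  have SR: "S \<subseteq> R"
  proof
    fix s assume s: "s \<in> S"
    obtain t where t: "t \<in> S" "E s t" using cluster_nbr[OF c s] by blast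
    show "s \<in> R"
    proof (rule ccontr)
      assume sR: "s \<notin> R"
      then have sJ: "s \<in> J" using s SX out by blast
      show False
      proof (cases "t \<in> R")
        case True
        have "E t s" using t(2) sg by (simp add: simple_graph_def)
        then have "s \<in> R" using P[of t s] True t(1) SX by blast
        then show False using sR by simp
      next
        case False
        then have "t \<in> J" using t(1) SX out by blast
        then show False using sJ t(2) J by (auto simp: indep_set_def)
      qed
    qed
  qed
  have SX': "S \<subseteq> X'" using SR SX agree by blast
  have bd': "bdry n E S \<inter> X' = {}"
  proof (rule ccontr)
    assume "bdry n E S \<inter> X' \<noteq> {}"
    then obtain b where b: "b \<in> bdry n E S" "b \<in> X'" by blast
    then obtain s where s: "s \<in> S" "E s b" by (auto simp: bdry_def)
    have "b \<in> R" using P[of s b] s SR SX by blast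
    then have "b \<in> X" using b(2) agree by blast
    then show False using b(1) bd by blast
  qed
  show ?thesis using cf SX' bd' by (simp add: is_cluster_def)
qed

lemma clusters_eq:
  assumes sg: "simple_graph n E"
    and P: "\<And>v u. v \<in> R \<Longrightarrow> v \<in> X \<Longrightarrow> E v u \<Longrightarrow> u \<in> R"
    and agree: "X \<inter> R = X' \<inter> R"
    and out: "X - R \<subseteq> I" and I: "indep_set n E I"
    and out': "X' - R \<subseteq> I'" and I': "indep_set n E I'"
  shows "clusters n E X = clusters n E X'"
proof -
  have P1: "\<forall>v u. v \<in> R \<and> v \<in> X \<and> E v u \<longrightarrow> u \<in> R" using P by blast
  have P2: "\<forall>v u. v \<in> R \<and> v \<in> X' \<and> E v u \<longrightarrow> u \<in> R" using P agree by blast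
  have A: "is_cluster n E X S \<Longrightarrow> is_cluster n E X' S" for S
    by (rule cluster_transfer[OF sg P1 agree out I])
  have B: "is_cluster n E X' S \<Longrightarrow> is_cluster n E X S" for S
    by (rule cluster_transfer[OF sg P2 agree[symmetric] out' I'])
  show ?thesis unfolding clusters_def using A B by blast
qed

locale prs =
  fixes n :: nat and E :: "nat \<Rightarrow> nat \<Rightarrow> bool" and lam :: real and f :: "nat set set \<Rightarrow> nat set"
  assumes sg: "simple_graph n E" and lam: "lam > 0" and cf: "choice_fun n E f"
begin

abbreviation "V \<equiv> vset n"
abbreviation "indep \<equiv> indep_set n E"
definition "Sx X = f (clusters n E X)"
definition "Tx X = clos n E (Sx X)"

lemma finV: "finite V" by (simp add: vset_def)

lemma Sx_cluster:
  assumes "X \<subseteq> V" "\<not> indep X"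
  shows "is_cluster n E X (Sx X)"
proof -
  have "clusters n E X \<noteq> {}" using assms indep_iff_no_cluster[OF sg] by blast
  then have "f (clusters n E X) \<in> clusters n E X" using cf clusters_sub by (auto simp: choice_fun_def)
  then show ?thesis by (simp add: Sx_def clusters_def)
qed

lemma Tx_sub: "X \<subseteq> V \<Longrightarrow> \<not> indep X \<Longrightarrow> Tx X \<subseteq> V"
proof -
  assume a: "X \<subseteq> V" "\<not> indep X"
  have "Sx X \<subseteq> V" using cluster_sub[OF Sx_cluster[OF a]] .
  then show ?thesis unfolding Tx_def by (rule clos_sub)
qed

lemma finTx: "X \<subseteq> V \<Longrightarrow> \<not> indep X \<Longrightarrow> finite (Tx X)"
  by (rule finite_subset[OF Tx_sub finV])

lemma step_indep: "indep X \<Longrightarrow> prs_step n E lam f X = return_pmf X"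
  by (simp add: prs_step_def)

lemma step_non: "\<not> indep X \<Longrightarrow> prs_step n E lam f X = map_pmf (\<lambda>Y. (X - Tx X) \<union> Y) (prod_sample lam (Tx X))"
  by (simp add: prs_step_def Tx_def Sx_def Let_def)

lemma iter_indep: "indep X \<Longrightarrow> iter n E lam f k X = return_pmf X"
  by (induction k) (simp_all add: step_indep bind_return_pmf)

lemma set_iter: "X \<subseteq> V \<Longrightarrow> set_pmf (iter n E lam f k X) \<subseteq> Pow V"
proof (induction k arbitrary: X)
  case 0 then show ?case by simp
next
  case (Suc k)
  show ?case
  proof (cases "indep X")
    case True then show ?thesis using Suc.prems by (simp only: iter_indep[OF True]) auto
  next
    case False
    have "set_pmf (prs_step n E lam f X) \<subseteq> Pow V"
      using False Suc.prems Tx_sub[OF Suc.prems False] set_prod_sample[of lam "Tx X"]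
      by (auto simp: step_non)
    show ?thesis
    proof
      fix W assume "W \<in> set_pmf (iter n E lam f (Suc k) X)"
      then obtain Z where Z: "Z \<in> set_pmf (prs_step n E lam f X)" "W \<in> set_pmf (iter n E lam f k Z)"
        by auto
      have "Z \<subseteq> V" using Z(1) \<open>set_pmf (prs_step n E lam f X) \<subseteq> Pow V\<close> by blast
      then show "W \<in> Pow V" using Suc.IH Z(2) by blast
    qed
  qed
qed

lemma pmf_iter_Suc:
  assumes X: "X \<subseteq> V" and ni: "\<not> indep X"
  shows "pmf (iter n E lam f (Suc k) X) I =
     (\<Sum>Y\<in>Pow (Tx X). psw lam (Tx X) Y * pmf (iter n E lam f k ((X - Tx X) \<union> Y)) I)"
proof -
  have "pmf (iter n E lam f (Suc k) X) I = pmf (bind_pmf (prod_sample lam (Tx X)) (\<lambda>Y. iter n E lam f k ((X - Tx X) \<union> Y))) I"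
    using ni by (simp add: step_non bind_map_pmf)
  also have "\<dots> = (\<Sum>Y\<in>Pow (Tx X). pmf (prod_sample lam (Tx X)) Y * pmf (iter n E lam f k ((X - Tx X) \<union> Y)) I)"
    using finTx[OF X ni] set_prod_sample by (intro pmf_bind_fin) auto
  also have "\<dots> = (\<Sum>Y\<in>Pow (Tx X). psw lam (Tx X) Y * pmf (iter n E lam f k ((X - Tx X) \<union> Y)) I)"
    by (intro sum.cong refl) (simp add: pmf_prod_sample finTx[OF X ni] lam)
  finally show ?thesis .
qed


primrec Wf :: "nat \<Rightarrow> nat set \<Rightarrow> nat set \<Rightarrow> nat set \<Rightarrow> real" where
  "Wf 0 X R I = (if X = I \<and> R = {} then 1 else 0)"
| "Wf (Suc k) X R I = (if indep X then (if X = I \<and> R = {} then 1 else 0) else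
     (\<Sum>Y\<in>Pow (Tx X). psw lam (Tx X) Y *
        (\<Sum>R'\<in>Pow V. if Tx X \<union> R' = R then Wf k ((X - Tx X) \<union> Y) R' I else 0)))"

lemma W_nonneg: "Wf k X R I \<ge> 0"
proof (induction k arbitrary: X R)
  case 0 then show ?case by simp
next
  case (Suc k)
  show ?case
  proof (cases "indep X")
    case True then show ?thesis by simp
  next
    case False
    then show ?thesis
      by (simp only: Wf.simps if_False) (intro sum_nonneg mult_nonneg_nonneg psw_nonneg[OF lam]; simp add: Suc.IH)
  qed
qed

lemma W_sum:
  assumes "X \<subseteq> V"
  shows "(\<Sum>R\<in>Pow V. Wf k X R I) = pmf (iter n E lam f k X) I"
  using assms
proof (induction k arbitrary: X)
  case 0
  have "(\<Sum>R\<in>Pow V. Wf 0 X R I) = (if X = I then 1 else 0)"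
    using finV by (simp add: sum.delta')
  then show ?case by (simp add: pmf_return indicator_def)
next
  case (Suc k)
  show ?case
  proof (cases "indep X")
    case True
    have "(\<Sum>R\<in>Pow V. Wf (Suc k) X R I) = (if X = I then 1 else 0)"
      using finV True by (simp add: sum.delta')
    then show ?thesis using True by (simp only: iter_indep[OF True]) (simp add: pmf_return indicator_def)
  next
    case False
    define T where "T = Tx X"
    have TV: "T \<subseteq> V" using Tx_sub[OF Suc.prems False] by (simp add: T_def)
    have finT: "finite T" using TV finV finite_subset by auto
    have "(\<Sum>R\<in>Pow V. Wf (Suc k) X R I) =
      (\<Sum>R\<in>Pow V. \<Sum>Y\<in>Pow T. psw lam T Y *
        (\<Sum>R'\<in>Pow V. if T \<union> R' = R then Wf k ((X - T) \<union> Y) R' I else 0))"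
      unfolding T_def using False by simp
    also have "\<dots> = (\<Sum>Y\<in>Pow T. \<Sum>R\<in>Pow V. psw lam T Y *
        (\<Sum>R'\<in>Pow V. if T \<union> R' = R then Wf k ((X - T) \<union> Y) R' I else 0))"
      by (rule sum.swap)
    also have "\<dots> = (\<Sum>Y\<in>Pow T. psw lam T Y * (\<Sum>R\<in>Pow V.
        (\<Sum>R'\<in>Pow V. if T \<union> R' = R then Wf k ((X - T) \<union> Y) R' I else 0)))"
      by (simp add: sum_distrib_left)
    also have "\<dots> = (\<Sum>Y\<in>Pow T. psw lam T Y * (\<Sum>R'\<in>Pow V.
        (\<Sum>R\<in>Pow V. if T \<union> R' = R then Wf k ((X - T) \<union> Y) R' I else 0)))"
      by (intro sum.cong refl arg_cong[where f="\<lambda>x. _ * x"] sum.swap)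
    also have "\<dots> = (\<Sum>Y\<in>Pow T. psw lam T Y * (\<Sum>R'\<in>Pow V. Wf k ((X - T) \<union> Y) R' I))"
    proof (intro sum.cong refl arg_cong[where f="\<lambda>x. _ * x"])
      fix Y R' assume "R' \<in> Pow V"
      then have "T \<union> R' \<in> Pow V" using TV by auto
      then show "(\<Sum>R\<in>Pow V. if T \<union> R' = R then Wf k ((X - T) \<union> Y) R' I else 0) = Wf k ((X - T) \<union> Y) R' I"
        using finV by (simp add: sum.delta)
    qed
    also have "\<dots> = (\<Sum>Y\<in>Pow T. psw lam T Y * pmf (iter n E lam f k ((X - T) \<union> Y)) I)"
    proof (intro sum.cong refl arg_cong[where f="\<lambda>x. _ * x"])
      fix Y assume "Y \<in> Pow T"
      then have "(X - T) \<union> Y \<subseteq> V" using TV Suc.prems by auto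
      then show "(\<Sum>R'\<in>Pow V. Wf k ((X - T) \<union> Y) R' I) = pmf (iter n E lam f k ((X - T) \<union> Y)) I"
        by (rule Suc.IH)
    qed
    also have "\<dots> = pmf (iter n E lam f (Suc k) X) I"
      using pmf_iter_Suc[OF Suc.prems False] by (simp add: T_def)
    finally show ?thesis .
  qed
qed

lemma W_Suc_pos:
  assumes X: "X \<subseteq> V" and ni: "\<not> indep X" and pos: "Wf (Suc k) X R I > 0"
  shows "\<exists>Y R'. Y \<subseteq> Tx X \<and> R' \<subseteq> V \<and> Tx X \<union> R' = R \<and> Wf k ((X - Tx X) \<union> Y) R' I > 0"
proof (rule ccontr)
  assume na: "\<not> ?thesis"
  have nz: "Wf k ((X - Tx X) \<union> Y) R' I \<le> 0" if "Y \<subseteq> Tx X" "R' \<subseteq> V" "Tx X \<union> R' = R" for Y R'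
  proof (rule ccontr)
    assume "\<not> Wf k ((X - Tx X) \<union> Y) R' I \<le> 0"
    then have "Wf k ((X - Tx X) \<union> Y) R' I > 0" by simp
    then show False using na that by blast
  qed
  have "Wf (Suc k) X R I = (\<Sum>Y\<in>Pow (Tx X). psw lam (Tx X) Y *
        (\<Sum>R'\<in>Pow V. if Tx X \<union> R' = R then Wf k ((X - Tx X) \<union> Y) R' I else 0))"
    using ni by simp
  also have "\<dots> \<le> 0"
  proof (intro sum_nonpos mult_nonneg_nonpos psw_nonneg[OF lam])
    fix Y R' assume "Y \<in> Pow (Tx X)" "R' \<in> Pow V"
    then show "(if Tx X \<union> R' = R then Wf k ((X - Tx X) \<union> Y) R' I else 0) \<le> 0"
      using nz[of Y R'] by simp
  qed
  finally have "Wf (Suc k) X R I \<le> 0" .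
  then show False using pos by simp
qed

lemma W_props:
  assumes "X \<subseteq> V" and "Wf k X R I > 0"
  shows "X - R = I - R \<and> (\<forall>v u. v \<in> R \<and> v \<in> X \<and> E v u \<longrightarrow> u \<in> R) \<and> R \<subseteq> V"
  using assms
proof (induction k arbitrary: X R)
  case 0 then show ?case by (simp split: if_splits)
next
  case (Suc k)
  show ?case
  proof (cases "indep X")
    case True then show ?thesis using Suc.prems by (simp split: if_splits)
  next
    case False
    obtain Y R' where YR: "Y \<subseteq> Tx X" "R' \<subseteq> V" "Tx X \<union> R' = R" "Wf k ((X - Tx X) \<union> Y) R' I > 0"
      using W_Suc_pos[OF Suc.prems(1) False Suc.prems(2)] by blast
    have TV: "Tx X \<subseteq> V" using Tx_sub[OF Suc.prems(1) False] .
    have ZV: "(X - Tx X) \<union> Y \<subseteq> V" using TV YR(1) Suc.prems(1) by auto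
    have IH: "((X - Tx X) \<union> Y) - R' = I - R'"
       "\<forall>v u. v \<in> R' \<and> v \<in> (X - Tx X) \<union> Y \<and> E v u \<longrightarrow> u \<in> R'"
      using Suc.IH[OF ZV YR(4)] by auto
    have c: "is_cluster n E X (Sx X)" using Sx_cluster[OF Suc.prems(1) False] .
    have "X - R = ((X - Tx X) \<union> Y) - R' - Tx X" using YR(1,3) by auto
    also have "\<dots> = I - R' - Tx X" using IH(1) by simp
    also have "\<dots> = I - R" using YR(3) by auto
    finally have Q: "X - R = I - R" .
    have P: "u \<in> R" if v: "v \<in> R" "v \<in> X" "E v u" for v u
    proof (cases "v \<in> Tx X")
      case True
      show ?thesis
      proof (cases "v \<in> Sx X")
        case True
        have "u \<in> V" using v(3) sg by (auto simp: simple_graph_def)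
        then have "u \<in> Tx X" using True v(3) by (auto simp: Tx_def clos_def bdry_def)
        then show ?thesis using YR(3) by blast
      next
        case False
        then have "v \<in> bdry n E (Sx X)" using \<open>v \<in> Tx X\<close> by (simp add: Tx_def clos_def)
        then show ?thesis using c v(2) by (auto simp: is_cluster_def)
      qed
    next
      case False
      then have "v \<in> R'" "v \<in> (X - Tx X) \<union> Y" using v YR(3) by auto
      then have "u \<in> R'" using IH(2) v(3) by blast
      then show ?thesis using YR(3) by auto
    qed
    show ?thesis
    proof (intro conjI allI impI)
      show "X - R = I - R" by (rule Q)
    next
      fix v u assume "v \<in> R \<and> v \<in> X \<and> E v u"
      then show "u \<in> R" using P by blast
    next
      show "R \<subseteq> V" using TV YR(2,3) by auto
    qed
  qed
qed

lemma W_Suc_split: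
  assumes ni: "\<not> indep X"
  shows "Wf (Suc k) X R I = (\<Sum>R'\<in>Pow V. if Tx X \<union> R' = R then
            (\<Sum>Y\<in>Pow (Tx X). psw lam (Tx X) Y * Wf k ((X - Tx X) \<union> Y) R' I) else 0)"
proof -
  have "Wf (Suc k) X R I = (\<Sum>Y\<in>Pow (Tx X). psw lam (Tx X) Y *
        (\<Sum>R'\<in>Pow V. if Tx X \<union> R' = R then Wf k ((X - Tx X) \<union> Y) R' I else 0))"
    using ni by simp
  also have "\<dots> = (\<Sum>Y\<in>Pow (Tx X). \<Sum>R'\<in>Pow V. psw lam (Tx X) Y *
        (if Tx X \<union> R' = R then Wf k ((X - Tx X) \<union> Y) R' I else 0))"
    by (simp only: sum_distrib_left)
  also have "\<dots> = (\<Sum>R'\<in>Pow V. \<Sum>Y\<in>Pow (Tx X). psw lam (Tx X) Y *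
        (if Tx X \<union> R' = R then Wf k ((X - Tx X) \<union> Y) R' I else 0))"
    by (rule sum.swap)
  also have "\<dots> = (\<Sum>R'\<in>Pow V. if Tx X \<union> R' = R then
            (\<Sum>Y\<in>Pow (Tx X). psw lam (Tx X) Y * Wf k ((X - Tx X) \<union> Y) R' I) else 0)"
  proof (rule sum.cong[OF refl])
    fix R' assume "R' \<in> Pow V"
    show "(\<Sum>Y\<in>Pow (Tx X). psw lam (Tx X) Y *
        (if Tx X \<union> R' = R then Wf k ((X - Tx X) \<union> Y) R' I else 0)) =
        (if Tx X \<union> R' = R then
            (\<Sum>Y\<in>Pow (Tx X). psw lam (Tx X) Y * Wf k ((X - Tx X) \<union> Y) R' I) else 0)"
      by (cases "Tx X \<union> R' = R") simp_all
  qed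
  finally show ?thesis .
qed

lemma indep_sub: "indep I \<Longrightarrow> I \<subseteq> V"
  by (simp add: indep_set_def)

lemma W_swap:
  assumes "X \<subseteq> V" "indep I" "indep I'" "X \<inter> R = X' \<inter> R" "X' - R = I' - R"
  shows "Wf k X R I * lam ^ card (I' \<inter> R) \<le> Wf k X' R I' * lam ^ card (I \<inter> R)"
  using assms
proof (induction k arbitrary: X X' R)
  case 0
  show ?case
  proof (cases "X = I \<and> R = {}")
    case True
    then have "X' = I'" using 0 by auto
    then show ?thesis using True by simp
  next
    case False
    then show ?thesis using lam W_nonneg[of 0 X' R I'] by simp
  qed
next
  case (Suc k)
  note XV = Suc.prems(1) and II = Suc.prems(2,3) and agree = Suc.prems(4) and out' = Suc.prems(5)
  have IV: "I \<subseteq> V" "I' \<subseteq> V" using II indep_sub by auto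
  have finI: "finite I" "finite I'" using IV finV finite_subset by auto
  show ?case
  proof (cases "Wf (Suc k) X R I > 0")
    case False
    then have "Wf (Suc k) X R I = 0" using W_nonneg[of "Suc k" X R I] by simp
    then show ?thesis using lam W_nonneg[of "Suc k" X' R I'] by simp
  next
    case pos: True
    have props: "X - R = I - R" "\<forall>v u. v \<in> R \<and> v \<in> X \<and> E v u \<longrightarrow> u \<in> R" "R \<subseteq> V"
      using W_props[OF XV pos] by auto
    have X'V: "X' \<subseteq> V"
    proof
      fix x assume "x \<in> X'"
      show "x \<in> V"
      proof (cases "x \<in> R")
        case True
        then have "x \<in> X" using \<open>x \<in> X'\<close> agree by (metis Int_iff)
        then show ?thesis using XV by auto
      next
        case False
        then have "x \<in> I'" using \<open>x \<in> X'\<close> out' by (metis Diff_iff)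
        then show ?thesis using IV by auto
      qed
    qed
    have P: "\<And>v u. v \<in> R \<Longrightarrow> v \<in> X \<Longrightarrow> E v u \<Longrightarrow> u \<in> R" using props(2) by blast
    have ceq: "clusters n E X = clusters n E X'"
      by (rule clusters_eq[OF sg P agree _ II(1) _ II(2)]) (use props(1) out' in auto)
    have Teq: "Tx X' = Tx X" by (simp add: Tx_def Sx_def ceq)
    have ieq: "indep X' \<longleftrightarrow> indep X"
      using indep_iff_no_cluster[OF sg XV] indep_iff_no_cluster[OF sg X'V] ceq by simp
    show ?thesis
    proof (cases "indep X")
      case True
      then have "X = I \<and> R = {}" using pos by (simp split: if_splits)
      then have "X' = I'" using out' by simp
      then show ?thesis using True ieq \<open>X = I \<and> R = {}\<close> by simp
    next
      case False
      define T where "T = Tx X"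
      have TV: "T \<subseteq> V" using Tx_sub[OF XV False] by (simp add: T_def)
      have finT: "finite T" using TV finV finite_subset by auto
      define A where "A R' = (\<Sum>Y\<in>Pow T. psw lam T Y * Wf k ((X - T) \<union> Y) R' I)" for R'
      define B where "B R' = (\<Sum>Y\<in>Pow T. psw lam T Y * Wf k ((X' - T) \<union> Y) R' I')" for R'
      have L: "Wf (Suc k) X R I = (\<Sum>R'\<in>Pow V. if T \<union> R' = R then A R' else 0)"
        unfolding A_def T_def by (rule W_Suc_split[OF False])
      have Rr: "Wf (Suc k) X' R I' = (\<Sum>R'\<in>Pow V. if T \<union> R' = R then B R' else 0)"
      proof -
        have ni': "\<not> indep X'" using False ieq by simp
        show ?thesis unfolding B_def T_def Teq[symmetric] by (rule W_Suc_split[OF ni'])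
      qed
      have key: "A R' * lam ^ card (I' \<inter> R) \<le> B R' * lam ^ card (I \<inter> R)"
        if R': "R' \<subseteq> V" "T \<union> R' = R" for R'
      proof -
        define w where "w Y = Wf k ((X - T) \<union> Y) R' I * lam ^ card (I' \<inter> R')" for Y
        define w' where "w' Y = Wf k ((X' - T) \<union> Y) R' I' * lam ^ card (I \<inter> R')" for Y
        have sc: "(\<Sum>Y\<in>Pow T. psw lam T Y * w Y) * lam ^ card (I' \<inter> (T - R'))
             \<le> (\<Sum>Y\<in>Pow T. psw lam T Y * w' Y) * lam ^ card (I \<inter> (T - R'))"
        proof (rule swap_core[OF finT lam, where w=w and w'=w' and K=R' and I=I and I'=I'])
          show "w Y \<ge> 0" for Y unfolding w_def using W_nonneg lam by simp
          show "w' Y \<ge> 0" for Y unfolding w'_def using W_nonneg lam by simp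
          show "Y \<inter> (T - R') = I \<inter> (T - R')" if Y: "Y \<subseteq> T" "w Y \<noteq> 0" for Y
          proof -
            have ZV: "(X - T) \<union> Y \<subseteq> V" using Y(1) TV XV by auto
            have ne: "Wf k ((X - T) \<union> Y) R' I \<noteq> 0"
              using Y(2) unfolding w_def by auto
            have wpos: "Wf k ((X - T) \<union> Y) R' I > 0"
              using ne W_nonneg[of k "(X - T) \<union> Y" R' I] by linarith
            have eq: "((X - T) \<union> Y) - R' = I - R'" using W_props[OF ZV wpos] by (rule conjunct1)
            have m: "((x \<in> X \<and> x \<notin> T) \<or> x \<in> Y) \<longleftrightarrow> x \<in> I" if "x \<notin> R'" for x
            proof -
              have "x \<in> ((X - T) \<union> Y) - R' \<longleftrightarrow> x \<in> I - R'" using eq by simp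
              then show ?thesis using that by simp
            qed
            show ?thesis
            proof (intro equalityI subsetI)
              fix x assume "x \<in> Y \<inter> (T - R')"
              then show "x \<in> I \<inter> (T - R')" using m[of x] by auto
            next
              fix x assume "x \<in> I \<inter> (T - R')"
              then show "x \<in> Y \<inter> (T - R')" using m[of x] by auto
            qed
          qed
          show "w Y \<le> w' ((Y \<inter> R') \<union> (I' \<inter> (T - R')))"
            if Y: "Y \<subseteq> T" "Y \<inter> (T - R') = I \<inter> (T - R')" for Y
          proof -
            have ZV: "(X - T) \<union> Y \<subseteq> V" using Y(1) TV XV by auto
            have agR: "x \<in> X \<longleftrightarrow> x \<in> X'" if "x \<in> R'" for x
            proof -
              have "x \<in> R" using that R'(2) by auto
              then show ?thesis using agree by (metis Int_iff)
            qed
            have outR: "x \<in> X' \<longleftrightarrow> x \<in> I'" if "x \<notin> T" "x \<notin> R'" for x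
            proof -
              have "x \<notin> R" using that R'(2) by auto
              then show ?thesis using out' by (metis Diff_iff)
            qed
            have a1: "((X - T) \<union> Y) \<inter> R' = ((X' - T) \<union> ((Y \<inter> R') \<union> (I' \<inter> (T - R')))) \<inter> R'"
              using agR by auto
            have a2: "((X' - T) \<union> ((Y \<inter> R') \<union> (I' \<inter> (T - R')))) - R' = I' - R'"
              using outR by auto
            show ?thesis unfolding w_def w'_def
              by (rule Suc.IH[OF ZV II a1 a2])
          qed
        qed
        have cd: "card (J \<inter> R) = card (J \<inter> R') + card (J \<inter> (T - R'))" if "finite J" for J
        proof -
          have "J \<inter> R = (J \<inter> R') \<union> (J \<inter> (T - R'))" using R'(2) by blast
          then have "card (J \<inter> R) = card ((J \<inter> R') \<union> (J \<inter> (T - R')))" by simp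
          also have "\<dots> = card (J \<inter> R') + card (J \<inter> (T - R'))"
            by (rule card_Un_disjoint) (use that in auto)
          finally show ?thesis .
        qed
        have e1: "A R' * lam ^ card (I' \<inter> R') = (\<Sum>Y\<in>Pow T. psw lam T Y * w Y)"
          unfolding A_def w_def by (simp only: sum_distrib_right mult.assoc)
        have e2: "B R' * lam ^ card (I \<inter> R') = (\<Sum>Y\<in>Pow T. psw lam T Y * w' Y)"
          unfolding B_def w'_def by (simp only: sum_distrib_right mult.assoc)
        have "A R' * lam ^ card (I' \<inter> R) = (A R' * lam ^ card (I' \<inter> R')) * lam ^ card (I' \<inter> (T - R'))"
          unfolding cd[OF finI(2)] power_add by (simp only: mult.assoc)
        also have "\<dots> = (\<Sum>Y\<in>Pow T. psw lam T Y * w Y) * lam ^ card (I' \<inter> (T - R'))"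
          by (simp only: e1)
        also have "\<dots> \<le> (\<Sum>Y\<in>Pow T. psw lam T Y * w' Y) * lam ^ card (I \<inter> (T - R'))" by (rule sc)
        also have "\<dots> = (B R' * lam ^ card (I \<inter> R')) * lam ^ card (I \<inter> (T - R'))"
          by (simp only: e2)
        also have "\<dots> = B R' * lam ^ card (I \<inter> R)"
          unfolding cd[OF finI(1)] power_add by (simp only: mult.assoc)
        finally show ?thesis .
      qed
      have "Wf (Suc k) X R I * lam ^ card (I' \<inter> R) = (\<Sum>R'\<in>Pow V. (if T \<union> R' = R then A R' else 0) * lam ^ card (I' \<inter> R))"
        by (simp only: L sum_distrib_right)
      also have "\<dots> \<le> (\<Sum>R'\<in>Pow V. (if T \<union> R' = R then B R' else 0) * lam ^ card (I \<inter> R))"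
      proof (rule sum_mono)
        fix R' assume R'V: "R' \<in> Pow V"
        show "(if T \<union> R' = R then A R' else 0) * lam ^ card (I' \<inter> R)
              \<le> (if T \<union> R' = R then B R' else 0) * lam ^ card (I \<inter> R)"
        proof (cases "T \<union> R' = R")
          case True
          have "A R' * lam ^ card (I' \<inter> R) \<le> B R' * lam ^ card (I \<inter> R)"
            using key R'V True by blast
          then show ?thesis using True by (simp only: if_True refl)
        next
          case False
          then show ?thesis by simp
        qed
      qed
      also have "\<dots> = Wf (Suc k) X' R I' * lam ^ card (I \<inter> R)"
        by (simp only: Rr sum_distrib_right)
      finally show ?thesis .
    qed
  qed
qed

lemma set_state: "set_pmf (prs_state n E lam f k) \<subseteq> Pow V"
proof
  fix W assume "W \<in> set_pmf (prs_state n E lam f k)"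
  then obtain X where X: "X \<in> set_pmf (prod_sample lam V)" "W \<in> set_pmf (iter n E lam f k X)"
    by (auto simp: state_eq)
  have "X \<subseteq> V" using X(1) set_prod_sample by blast
  then show "W \<in> Pow V" using set_iter X(2) by blast
qed

lemma pmf_state_add:
  "pmf (prs_state n E lam f (k + m)) I = (\<Sum>X\<in>Pow V. pmf (prs_state n E lam f k) X * pmf (iter n E lam f m X) I)"
  unfolding state_add using finV set_state by (intro pmf_bind_fin) auto

lemma pmf_state:
  "pmf (prs_state n E lam f k) I = (\<Sum>X\<in>Pow V. psw lam V X * (\<Sum>R\<in>Pow V. Wf k X R I))"
proof -
  have "pmf (prs_state n E lam f k) I = (\<Sum>X\<in>Pow V. pmf (prod_sample lam V) X * pmf (iter n E lam f k X) I)"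
    unfolding state_eq using finV set_prod_sample by (intro pmf_bind_fin) auto
  also have "\<dots> = (\<Sum>X\<in>Pow V. psw lam V X * (\<Sum>R\<in>Pow V. Wf k X R I))"
  proof (rule sum.cong[OF refl])
    fix X assume "X \<in> Pow V"
    then show "pmf (prod_sample lam V) X * pmf (iter n E lam f k X) I = psw lam V X * (\<Sum>R\<in>Pow V. Wf k X R I)"
      using W_sum[of X k I] pmf_prod_sample[OF finV lam] by simp
  qed
  finally show ?thesis .
qed

lemma state_ratio:
  assumes I: "indep I" and I': "indep I'"
  shows "pmf (prs_state n E lam f k) I * lam ^ card I' \<le> pmf (prs_state n E lam f k) I' * lam ^ card I"
proof -
  have IV: "I \<subseteq> V" "I' \<subseteq> V" using I I' indep_sub by auto
  have finI: "finite I" "finite I'" using IV finV finite_subset by auto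
  have cdV: "card J = card (J \<inter> R) + card (J \<inter> (V - R))" if "J \<subseteq> V" "finite J" for J R
  proof -
    have "J = (J \<inter> R) \<union> (J \<inter> (V - R))" using that(1) by blast
    then have "card J = card ((J \<inter> R) \<union> (J \<inter> (V - R)))" by simp
    also have "\<dots> = card (J \<inter> R) + card (J \<inter> (V - R))"
      by (rule card_Un_disjoint) (use that in auto)
    finally show ?thesis .
  qed
  have eqL: "pmf (prs_state n E lam f k) J * lam ^ card J' =
      (\<Sum>R\<in>Pow V. (\<Sum>X\<in>Pow V. psw lam V X * Wf k X R J) * lam ^ card J')" for J J'
  proof -
    have "pmf (prs_state n E lam f k) J * lam ^ card J' = (\<Sum>X\<in>Pow V. \<Sum>R\<in>Pow V. psw lam V X * Wf k X R J) * lam ^ card J'"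
      unfolding pmf_state by (simp only: sum_distrib_left)
    also have "\<dots> = (\<Sum>R\<in>Pow V. \<Sum>X\<in>Pow V. psw lam V X * Wf k X R J) * lam ^ card J'"
      by (rule arg_cong[where f="\<lambda>x. x * _"], rule sum.swap)
    also have "\<dots> = (\<Sum>R\<in>Pow V. (\<Sum>X\<in>Pow V. psw lam V X * Wf k X R J) * lam ^ card J')"
      by (simp only: sum_distrib_right)
    finally show ?thesis .
  qed
  have key: "(\<Sum>X\<in>Pow V. psw lam V X * Wf k X R I) * lam ^ card I'
      \<le> (\<Sum>X\<in>Pow V. psw lam V X * Wf k X R I') * lam ^ card I" if R: "R \<subseteq> V" for R
  proof -
    define w where "w X = Wf k X R I * lam ^ card (I' \<inter> R)" for X
    define w' where "w' X = Wf k X R I' * lam ^ card (I \<inter> R)" for X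
    have sc: "(\<Sum>X\<in>Pow V. psw lam V X * w X) * lam ^ card (I' \<inter> (V - R))
         \<le> (\<Sum>X\<in>Pow V. psw lam V X * w' X) * lam ^ card (I \<inter> (V - R))"
    proof (rule swap_core[OF finV lam, where w=w and w'=w' and K=R and I=I and I'=I'])
      show "w X \<ge> 0" for X unfolding w_def using W_nonneg lam by simp
      show "w' X \<ge> 0" for X unfolding w'_def using W_nonneg lam by simp
      show "X \<inter> (V - R) = I \<inter> (V - R)" if X: "X \<subseteq> V" "w X \<noteq> 0" for X
      proof -
        have ne: "Wf k X R I \<noteq> 0" using X(2) unfolding w_def by auto
        have wpos: "Wf k X R I > 0" using ne W_nonneg[of k X R I] by linarith
        have eq: "X - R = I - R" using W_props[OF X(1) wpos] by (rule conjunct1)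
        have m: "x \<in> X \<longleftrightarrow> x \<in> I" if "x \<notin> R" for x
        proof -
          have "x \<in> X - R \<longleftrightarrow> x \<in> I - R" using eq by simp
          then show ?thesis using that by simp
        qed
        show ?thesis
        proof (intro equalityI subsetI)
          fix x assume "x \<in> X \<inter> (V - R)"
          then show "x \<in> I \<inter> (V - R)" using m[of x] by auto
        next
          fix x assume "x \<in> I \<inter> (V - R)"
          then show "x \<in> X \<inter> (V - R)" using m[of x] by auto
        qed
      qed
      show "w X \<le> w' ((X \<inter> R) \<union> (I' \<inter> (V - R)))"
        if X: "X \<subseteq> V" "X \<inter> (V - R) = I \<inter> (V - R)" for X
      proof -
        have a1: "X \<inter> R = ((X \<inter> R) \<union> (I' \<inter> (V - R))) \<inter> R" by auto
        have a2: "((X \<inter> R) \<union> (I' \<inter> (V - R))) - R = I' - R" using IV(2) by auto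
        show ?thesis unfolding w_def w'_def by (rule W_swap[OF X(1) I I' a1 a2])
      qed
    qed
    have e1: "(\<Sum>X\<in>Pow V. psw lam V X * Wf k X R I) * lam ^ card (I' \<inter> R) = (\<Sum>X\<in>Pow V. psw lam V X * w X)"
      unfolding w_def by (simp only: sum_distrib_right mult.assoc)
    have e2: "(\<Sum>X\<in>Pow V. psw lam V X * Wf k X R I') * lam ^ card (I \<inter> R) = (\<Sum>X\<in>Pow V. psw lam V X * w' X)"
      unfolding w'_def by (simp only: sum_distrib_right mult.assoc)
    have "(\<Sum>X\<in>Pow V. psw lam V X * Wf k X R I) * lam ^ card I'
        = ((\<Sum>X\<in>Pow V. psw lam V X * Wf k X R I) * lam ^ card (I' \<inter> R)) * lam ^ card (I' \<inter> (V - R))"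
      unfolding cdV[OF IV(2) finI(2), of R] power_add by (simp only: mult.assoc)
    also have "\<dots> = (\<Sum>X\<in>Pow V. psw lam V X * w X) * lam ^ card (I' \<inter> (V - R))" by (simp only: e1)
    also have "\<dots> \<le> (\<Sum>X\<in>Pow V. psw lam V X * w' X) * lam ^ card (I \<inter> (V - R))" by (rule sc)
    also have "\<dots> = ((\<Sum>X\<in>Pow V. psw lam V X * Wf k X R I') * lam ^ card (I \<inter> R)) * lam ^ card (I \<inter> (V - R))"
      by (simp only: e2)
    also have "\<dots> = (\<Sum>X\<in>Pow V. psw lam V X * Wf k X R I') * lam ^ card I"
      unfolding cdV[OF IV(1) finI(1), of R] power_add by (simp only: mult.assoc)
    finally show ?thesis .
  qed
  show ?thesis
    unfolding eqL by (rule sum_mono) (use key in auto)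
qed


definition "ISet = {J. indep J}"
definition "pind M = (\<Sum>J\<in>ISet. pmf M J)"
definition "q = 1 / (1 + lam) ^ n"

lemma IS_sub: "ISet \<subseteq> Pow V" using indep_sub by (auto simp: ISet_def)
lemma finIS: "finite ISet" using IS_sub finV by (meson finite_Pow_iff finite_subset)

lemma prob_eq: "measure_pmf.prob M {X. indep X} = pind M"
  unfolding pind_def ISet_def[symmetric] using finIS by (rule measure_measure_pmf_finite)

lemma pind_nonneg: "pind M \<ge> 0" unfolding pind_def by (simp add: sum_nonneg)

lemma pind_return: "pind (return_pmf X) = (if indep X then 1 else 0)"
proof -
  have "pind (return_pmf X) = (\<Sum>J\<in>ISet. if J = X then 1 else 0)"
    unfolding pind_def by (intro sum.cong refl) (simp add: pmf_return indicator_def)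
  also have "\<dots> = (if indep X then 1 else 0)" using finIS by (simp add: sum.delta ISet_def)
  finally show ?thesis .
qed

lemma pind_le1: "set_pmf M \<subseteq> Pow V \<Longrightarrow> pind M \<le> 1"
proof -
  assume a: "set_pmf M \<subseteq> Pow V"
  have "pind M \<le> (\<Sum>J\<in>Pow V. pmf M J)" unfolding pind_def
    using IS_sub finV by (intro sum_mono2) auto
  also have "\<dots> = 1" using a finV by (intro sum_pmf_eq_1) auto
  finally show ?thesis .
qed

lemma pind_iter_Suc:
  assumes X: "X \<subseteq> V" and ni: "\<not> indep X"
  shows "pind (iter n E lam f (Suc k) X) =
     (\<Sum>Y\<in>Pow (Tx X). psw lam (Tx X) Y * pind (iter n E lam f k ((X - Tx X) \<union> Y)))"
proof -
  have "pind (iter n E lam f (Suc k) X) = (\<Sum>J\<in>ISet. \<Sum>Y\<in>Pow (Tx X). psw lam (Tx X) Y * pmf (iter n E lam f k ((X - Tx X) \<union> Y)) J)"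
    unfolding pind_def using pmf_iter_Suc[OF X ni] by simp
  also have "\<dots> = (\<Sum>Y\<in>Pow (Tx X). \<Sum>J\<in>ISet. psw lam (Tx X) Y * pmf (iter n E lam f k ((X - Tx X) \<union> Y)) J)"
    by (rule sum.swap)
  also have "\<dots> = (\<Sum>Y\<in>Pow (Tx X). psw lam (Tx X) Y * pind (iter n E lam f k ((X - Tx X) \<union> Y)))"
    unfolding pind_def by (simp only: sum_distrib_left)
  finally show ?thesis .
qed

lemma q_pos: "q > 0" using lam by (simp add: q_def)
lemma q_le1: "q \<le> 1" using lam by (simp add: q_def)

lemma cardV: "card V = n" by (simp add: vset_def)

lemma pi_bound: "X \<subseteq> V \<Longrightarrow> card X \<le> m \<Longrightarrow> pind (iter n E lam f m X) \<ge> q ^ m"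
proof (induction m arbitrary: X)
  case 0
  have finX: "finite X" using 0(1) finV finite_subset by auto
  then have "X = {}" using 0(2) by simp
  then have "indep X" by (simp add: indep_set_def)
  then show ?case by (simp add: pind_return)
next
  case (Suc m)
  show ?case
  proof (cases "indep X")
    case True
    then have "pind (iter n E lam f (Suc m) X) = 1" by (simp only: iter_indep[OF True] pind_return) simp
    moreover have "q ^ Suc m \<le> 1" using q_pos q_le1 by (intro power_le_one) auto
    ultimately show ?thesis by simp
  next
    case False
    define T where "T = Tx X"
    have TV: "T \<subseteq> V" using Tx_sub[OF Suc.prems(1) False] by (simp add: T_def)
    have finT: "finite T" using TV finV finite_subset by auto
    have finX: "finite X" using Suc.prems(1) finV finite_subset by auto
    have c: "is_cluster n E X (Sx X)" using Sx_cluster[OF Suc.prems(1) False] .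
    have "Sx X \<noteq> {}" using c by (auto simp: is_cluster_def conn_family_def)
    then obtain s where s: "s \<in> Sx X" by auto
    have "s \<in> X" using s c by (auto simp: is_cluster_def)
    moreover have "s \<in> T" using s by (simp add: T_def Tx_def clos_def)
    ultimately have "X - T \<subset> X" by blast
    then have "card (X - T) < card X" using finX psubset_card_mono by auto
    then have cXT: "card (X - T) \<le> m" using Suc.prems(2) by simp
    have XTV: "X - T \<subseteq> V" using Suc.prems(1) by auto
    have IH: "pind (iter n E lam f m (X - T)) \<ge> q ^ m" using Suc.IH[OF XTV cXT] .
    have pswe: "psw lam T {} \<ge> q"
    proof -
      have "card T \<le> n" using card_mono[OF finV TV] cardV by simp
      then have "(1 + lam) ^ card T \<le> (1 + lam) ^ n" using lam by (intro power_increasing) auto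
      then show ?thesis using lam by (simp add: psw_def q_def frac_le)
    qed
    have "q ^ Suc m = q * q ^ m" by simp
    also have "\<dots> \<le> psw lam T {} * pind (iter n E lam f m (X - T))"
      using pswe IH q_pos by (intro mult_mono) auto
    also have "\<dots> = psw lam T {} * pind (iter n E lam f m ((X - T) \<union> {}))" by simp
    also have "\<dots> \<le> (\<Sum>Y\<in>Pow T. psw lam T Y * pind (iter n E lam f m ((X - T) \<union> Y)))"
      using finT lam by (intro member_le_sum) (auto intro!: mult_nonneg_nonneg psw_nonneg pind_nonneg)
    also have "\<dots> = pind (iter n E lam f (Suc m) X)"
      using pind_iter_Suc[OF Suc.prems(1) False] by (simp add: T_def)
    finally show ?thesis .
  qed
qed

definition "sq k = pind (prs_state n E lam f k)"

lemma sq_add: "sq (k + m) = (\<Sum>X\<in>Pow V. pmf (prs_state n E lam f k) X * pind (iter n E lam f m X))"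
proof -
  have "sq (k + m) = (\<Sum>J\<in>ISet. \<Sum>X\<in>Pow V. pmf (prs_state n E lam f k) X * pmf (iter n E lam f m X) J)"
    unfolding sq_def pind_def pmf_state_add by simp
  also have "\<dots> = (\<Sum>X\<in>Pow V. \<Sum>J\<in>ISet. pmf (prs_state n E lam f k) X * pmf (iter n E lam f m X) J)"
    by (rule sum.swap)
  also have "\<dots> = (\<Sum>X\<in>Pow V. pmf (prs_state n E lam f k) X * pind (iter n E lam f m X))"
    unfolding pind_def by (simp only: sum_distrib_left)
  finally show ?thesis .
qed

lemma sq_as_sum: "sq k = (\<Sum>X\<in>Pow V. pmf (prs_state n E lam f k) X * (if indep X then 1 else 0))"
proof -
  have "sq k = (\<Sum>X\<in>Pow V \<inter> ISet. pmf (prs_state n E lam f k) X)"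
    unfolding sq_def pind_def using IS_sub by (simp add: Int_absorb1)
  also have "\<dots> = (\<Sum>X\<in>Pow V. if X \<in> ISet then pmf (prs_state n E lam f k) X else 0)"
    using finV by (simp add: sum.inter_restrict)
  also have "\<dots> = (\<Sum>X\<in>Pow V. pmf (prs_state n E lam f k) X * (if indep X then 1 else 0))"
    by (intro sum.cong refl) (simp add: ISet_def)
  finally show ?thesis .
qed

lemma sum_state: "(\<Sum>X\<in>Pow V. pmf (prs_state n E lam f k) X) = 1"
  using finV set_state by (intro sum_pmf_eq_1) auto

lemma sq_le1: "sq k \<le> 1" unfolding sq_def using set_state by (rule pind_le1)

lemma sq_mono: "sq k \<le> sq (Suc k)"
proof -
  have "sq (Suc k) = (\<Sum>X\<in>Pow V. pmf (prs_state n E lam f k) X * pind (iter n E lam f 1 X))"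
    using sq_add[of k 1] by simp
  also have "\<dots> \<ge> (\<Sum>X\<in>Pow V. pmf (prs_state n E lam f k) X * (if indep X then 1 else 0))"
  proof (rule sum_mono)
    fix X assume "X \<in> Pow V"
    have "(if indep X then 1 else 0) \<le> pind (iter n E lam f 1 X)"
    proof (cases "indep X")
      case True
      then show ?thesis by (simp only: iter_indep[OF True] pind_return)
    next
      case False then show ?thesis using pind_nonneg by simp
    qed
    then show "pmf (prs_state n E lam f k) X * (if indep X then 1 else 0) \<le> pmf (prs_state n E lam f k) X * pind (iter n E lam f 1 X)"
      by (intro mult_left_mono) auto
  qed
  finally show ?thesis using sq_as_sum by simp
qed

lemma sq_contract: "1 - sq (k + n) \<le> (1 - q ^ n) * (1 - sq k)"
proof -
  have "sq (k + n) = (\<Sum>X\<in>Pow V. pmf (prs_state n E lam f k) X * pind (iter n E lam f n X))"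
    by (rule sq_add)
  also have "\<dots> \<ge> (\<Sum>X\<in>Pow V. pmf (prs_state n E lam f k) X * (q ^ n + (1 - q ^ n) * (if indep X then 1 else 0)))"
  proof (rule sum_mono)
    fix X assume XV: "X \<in> Pow V"
    have "q ^ n + (1 - q ^ n) * (if indep X then 1 else 0) \<le> pind (iter n E lam f n X)"
    proof (cases "indep X")
      case True
      then show ?thesis by (simp only: iter_indep[OF True] pind_return) simp
    next
      case False
      have "card X \<le> n" using card_mono[OF finV] XV cardV by auto
      then show ?thesis using pi_bound[of X n] XV False by simp
    qed
    then show "pmf (prs_state n E lam f k) X * (q ^ n + (1 - q ^ n) * (if indep X then 1 else 0)) \<le> pmf (prs_state n E lam f k) X * pind (iter n E lam f n X)"
      by (intro mult_left_mono) auto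
  qed
  also have "(\<Sum>X\<in>Pow V. pmf (prs_state n E lam f k) X * (q ^ n + (1 - q ^ n) * (if indep X then 1 else 0)))
       = q ^ n * (\<Sum>X\<in>Pow V. pmf (prs_state n E lam f k) X) + (1 - q ^ n) * (\<Sum>X\<in>Pow V. pmf (prs_state n E lam f k) X * (if indep X then 1 else 0))"
  proof -
    have "(\<Sum>X\<in>Pow V. pmf (prs_state n E lam f k) X * (q ^ n + (1 - q ^ n) * (if indep X then 1 else 0)))
      = (\<Sum>X\<in>Pow V. q ^ n * pmf (prs_state n E lam f k) X + (1 - q ^ n) * (pmf (prs_state n E lam f k) X * (if indep X then 1 else 0)))"
      by (intro sum.cong refl) (simp add: algebra_simps)
    also have "\<dots> = q ^ n * (\<Sum>X\<in>Pow V. pmf (prs_state n E lam f k) X) + (1 - q ^ n) * (\<Sum>X\<in>Pow V. pmf (prs_state n E lam f k) X * (if indep X then 1 else 0))"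
      by (simp only: sum.distrib sum_distrib_left)
    finally show ?thesis .
  qed
  also have "\<dots> = q ^ n + (1 - q ^ n) * sq k" using sum_state sq_as_sum by simp
  finally show ?thesis by (simp add: algebra_simps)
qed

lemma sq_lim: "sq \<longlonglongrightarrow> 1"
proof -
  define b where "b k = 1 - sq k" for k
  define r where "r = 1 - q ^ n"
  have b0: "\<And>k. b k \<ge> 0" using sq_le1 by (simp add: b_def)
  have bmono: "\<And>k. b (Suc k) \<le> b k" using sq_mono by (simp add: b_def)
  have bmono': "b k' \<le> b k" if "k \<le> k'" for k k'
    using lift_Suc_antimono_le[of b, OF bmono that] .
  have r0: "0 \<le> r" "r < 1" using q_pos q_le1 by (auto simp: r_def power_le_one)
  define M where "M = Suc n"
  have bM: "b (k + M) \<le> r * b k" for k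
  proof -
    have "b (k + M) \<le> b (k + n)" using bmono' by (simp add: M_def)
    also have "\<dots> \<le> r * b k" using sq_contract[of k] by (simp add: b_def r_def)
    finally show ?thesis .
  qed
  have bj: "b (j * M) \<le> r ^ j" for j
  proof (induction j)
    case 0
    have "sq 0 \<ge> 0" unfolding sq_def by (rule pind_nonneg)
    then show ?case by (simp add: b_def)
  next
    case (Suc j)
    have "b (Suc j * M) = b (j * M + M)" by (simp add: add.commute)
    also have "\<dots> \<le> r * b (j * M)" by (rule bM)
    also have "\<dots> \<le> r * r ^ j" using Suc r0 by (intro mult_left_mono) auto
    finally show ?case by simp
  qed
  show ?thesis
  proof (rule LIMSEQ_I)
    fix e :: real assume e: "0 < e"
    have "(\<lambda>j. r ^ j) \<longlonglongrightarrow> 0" using r0 by (intro LIMSEQ_power_zero) simp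
    from LIMSEQ_D[OF this e] obtain j where j: "norm (r ^ j - 0) < e" by auto
    show "\<exists>no. \<forall>k\<ge>no. norm (sq k - 1) < e"
    proof (intro exI allI impI)
      fix k assume "j * M \<le> k"
      then have "b k \<le> r ^ j" using bmono' bj order_trans by blast
      then show "norm (sq k - 1) < e" using j b0[of k] r0 by (simp add: b_def)
    qed
  qed
qed

lemma gibbs:
  assumes I: "indep I"
  shows "pmf (prs_state n E lam f k) I * (\<Sum>J\<in>ISet. lam ^ card J) = lam ^ card I * sq k"
proof -
  have "pmf (prs_state n E lam f k) I * (\<Sum>J\<in>ISet. lam ^ card J) = (\<Sum>J\<in>ISet. pmf (prs_state n E lam f k) I * lam ^ card J)"
    by (simp add: sum_distrib_left)
  also have "\<dots> = (\<Sum>J\<in>ISet. pmf (prs_state n E lam f k) J * lam ^ card I)"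
  proof (rule sum.cong[OF refl])
    fix J assume "J \<in> ISet"
    then have J: "indep J" by (simp add: ISet_def)
    show "pmf (prs_state n E lam f k) I * lam ^ card J = pmf (prs_state n E lam f k) J * lam ^ card I"
      using state_ratio[OF I J, where k=k] state_ratio[OF J I, where k=k] by linarith
  qed
  also have "\<dots> = lam ^ card I * sq k" unfolding sq_def pind_def
    by (simp add: sum_distrib_left mult.commute)
  finally show ?thesis .
qed

lemma Zpos: "(\<Sum>J\<in>ISet. lam ^ card J) > 0"
proof -
  have "{} \<in> ISet" by (simp add: ISet_def indep_set_def)
  then have "lam ^ card ({}::nat set) \<le> (\<Sum>J\<in>ISet. lam ^ card J)"
    using finIS lam by (intro member_le_sum) auto
  then show ?thesis by simp
qed

end

theorem lemma6:
  fixes n :: nat and E :: "nat \<Rightarrow> nat \<Rightarrow> bool" and lam :: real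
    and f :: "nat set set \<Rightarrow> nat set"
  assumes "simple_graph n E" and "lam > 0" and "choice_fun n E f"
  shows "((\<lambda>k. measure_pmf.prob (prs_state n E lam f k) {X. indep_set n E X}) \<longlonglongrightarrow> 1)
    \<and> (\<forall>I. indep_set n E I \<longrightarrow>
           (\<lambda>k. pmf (prs_state n E lam f k) I) \<longlonglongrightarrow>
             lam ^ card I / (\<Sum>J\<in>{J. indep_set n E J}. lam ^ card J))"
proof -
  interpret p: prs n E lam f using assms by unfold_locales
  have A: "(\<lambda>k. measure_pmf.prob (prs_state n E lam f k) {X. indep_set n E X}) = p.sq"
    by (rule ext) (simp add: p.prob_eq p.sq_def)
  define Z where "Z = (\<Sum>J\<in>{J. indep_set n E J}. lam ^ card J)"
  have Zpos: "Z > 0" using p.Zpos by (simp add: Z_def p.ISet_def)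
  have B: "(\<lambda>k. pmf (prs_state n E lam f k) I) \<longlonglongrightarrow> lam ^ card I / Z" if I: "indep_set n E I" for I
  proof -
    have eq: "(\<lambda>k. pmf (prs_state n E lam f k) I) = (\<lambda>k. lam ^ card I * p.sq k / Z)"
    proof (rule ext)
      fix k
      have "pmf (prs_state n E lam f k) I * Z = lam ^ card I * p.sq k"
        using p.gibbs[OF I, of k] by (simp add: Z_def p.ISet_def)
      then show "pmf (prs_state n E lam f k) I = lam ^ card I * p.sq k / Z"
        using Zpos by (simp add: field_simps)
    qed
    have "(\<lambda>k. lam ^ card I * p.sq k / Z) \<longlonglongrightarrow> lam ^ card I * 1 / Z"
      by (intro tendsto_intros p.sq_lim) (use Zpos in simp)
    then show ?thesis unfolding eq by simp
  qed
  show ?thesis using A p.sq_lim B by (simp add: Z_def)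
qed

end
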